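(* If $\mathfrak R$ is the Sierpiński gasket iterated graph system, then for all $m\in\mathbb N$ and $i,j\in\{0,1,2\}$, \[ d_{G_m}(i^m,j^m)\le 2^m-1. \] If $\mathfrak R$ is the pentagonal Sierpiński carpet iterated graph system, then for all $m\in\mathbb N$ and $i,j\in\{0,1,2,3,4\}$, \[ d_{G_m}(i^m,j^m)\le 2^{m+1}-1. \] Here $i^m\in W_m$ denotes the word consisting of the symbol $i$ repeated $m$ times.
   Context: Graphs: $(V,E)$, $V$ finite non-empty, $E\subseteq V\times V$, $(x,y)\in E\Rightarrow(y,x)\notin E$; $d_G$ is the shortest-path metric in the underlying undirected graph. An iterated graph system consists of a connected graph $G_1=(S,E)$, a finite set $\mathcal T$ of types, a surjective typing $\mathfrak t:E\to\mathcal T$ and non-empty gluing rules $I_t\subseteq S\times S$. With $W_m=S^m$, $[w]_k=w_1\cdots w_k$, the replacement graphs $G_m=(W_m,E_m)$ are defined recursively: $(w,v)\in E_{m+1}$ iff either (1) $[w]_m=[v]_m$ and $(w_{m+1},v_{m+1})\in E$ (type $\mathfrak t(w_{m+1},v_{m+1})$), or (2) $([w]_m,[v]_m)\in E_m$ and $(w_{m+1},v_{m+1})\in I_{\mathfrak t([w]_m,[v]_m)}$ (type $\mathfrak t([w]_m,[v]_m)$). Sierpiński gasket: $S=\{0,1,2\}$, $E=\{(0,1),(1,2),(0,2)\}$ of types $a,b,c$ respectively, $I_a=\{(1,0)\}$, $I_b=\{(2,1)\}$, $I_c=\{(2,0)\}$. Pentagonal Sierpiński carpet: $S=\{0,1,2,3,4\}$,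 $E=\{(0,1),(1,2),(2,3),(3,4),(4,0)\}$ of types $a,b,c,d,e$ respectively, $I_a=\{(1,0),(2,4)\}$, $I_b=\{(2,1),(3,0)\}$, $I_c=\{(3,2),(4,1)\}$, $I_d=\{(4,3),(0,2)\}$, $I_e=\{(0,4),(1,3)\}$. *)

theory Defs
  imports Main "HOL-Library.Extended_Nat"
begin

text \<open>Iterated graph system given by: alphabet S, edge set E of G_1 = (S,E),
  typing ty (only relevant on E), gluing rules I t for each type t.
  Words in W_m = S^m are lists of length m over S.
  igs_edges ... m is the set of typed edges ((w,v),type) of G_m (m >= 1).\<close>

fun igs_edges ::
  "'s set \<Rightarrow> ('s \<times> 's) set \<Rightarrow> ('s \<times> 's \<Rightarrow> 't) \<Rightarrow> ('t \<Rightarrow> ('s \<times> 's) set) \<Rightarrow> nat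
   \<Rightarrow> (('s list \<times> 's list) \<times> 't) set" where
  "igs_edges S E ty I 0 = {}"
| "igs_edges S E ty I (Suc 0) = {(([x], [y]), ty (x, y)) | x y. (x, y) \<in> E}"
| "igs_edges S E ty I (Suc (Suc m)) =
     {((u @ [x], u @ [y]), ty (x, y)) | u x y.
         length u = Suc m \<and> set u \<subseteq> S \<and> (x, y) \<in> E}
   \<union> {((u @ [x], v @ [y]), t) | u v x y t.
         ((u, v), t) \<in> igs_edges S E ty I (Suc m) \<and> (x, y) \<in> I t}"

definition igs_adj ::
  "'s set \<Rightarrow> ('s \<times> 's) set \<Rightarrow> ('s \<times> 's \<Rightarrow> 't) \<Rightarrow> ('t \<Rightarrow> ('s \<times> 's) set) \<Rightarrow> nat
   \<Rightarrow> ('s list \<times> 's list) set" where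
  "igs_adj S E ty I m =
     {(w, v). \<exists>t. ((w, v), t) \<in> igs_edges S E ty I m \<or> ((v, w), t) \<in> igs_edges S E ty I m}"

text \<open>Shortest-path distance d_{G_m} in the underlying undirected graph
  (infinity if not connected): least number of steps of a walk.\<close>
definition igs_dist ::
  "'s set \<Rightarrow> ('s \<times> 's) set \<Rightarrow> ('s \<times> 's \<Rightarrow> 't) \<Rightarrow> ('t \<Rightarrow> ('s \<times> 's) set) \<Rightarrow> nat
   \<Rightarrow> 's list \<Rightarrow> 's list \<Rightarrow> enat" where
  "igs_dist S E ty I m w v =
     (INF n \<in> {n. (w, v) \<in> (igs_adj S E ty I m) ^^ n}. enat n)"

section \<open>Sierpinski gasket: types a,b,c encoded as 0,1,2\<close>

definition SG_S :: "nat set" where "SG_S = {0, 1, 2}"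
definition SG_E :: "(nat \<times> nat) set" where "SG_E = {(0, 1), (1, 2), (0, 2)}"
definition SG_ty :: "nat \<times> nat \<Rightarrow> nat" where
  "SG_ty e = (if e = (0, 1) then 0 else if e = (1, 2) then 1 else 2)"
definition SG_I :: "nat \<Rightarrow> (nat \<times> nat) set" where
  "SG_I t = (if t = 0 then {(1, 0)} else if t = 1 then {(2, 1)} else {(2, 0)})"

section \<open>Pentagonal Sierpinski carpet: types a,b,c,d,e encoded as 0..4\<close>

definition PC_S :: "nat set" where "PC_S = {0, 1, 2, 3, 4}"
definition PC_E :: "(nat \<times> nat) set" where
  "PC_E = {(0, 1), (1, 2), (2, 3), (3, 4), (4, 0)}"
definition PC_ty :: "nat \<times> nat \<Rightarrow> nat" where
  "PC_ty e = fst e"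
definition PC_I :: "nat \<Rightarrow> (nat \<times> nat) set" where
  "PC_I t = (if t = 0 then {(1, 0), (2, 4)}
        else if t = 1 then {(2, 1), (3, 0)}
        else if t = 2 then {(3, 2), (4, 1)}
        else if t = 3 then {(4, 3), (0, 2)}
        else {(0, 4), (1, 3)})"

end

theory Submission
  imports Defs
begin


lemma e1: "length u = Suc m \<Longrightarrow> set u \<subseteq> S \<Longrightarrow> (x,y)\<in>E \<Longrightarrow> ((u@[x],u@[y]),ty(x,y)) \<in> igs_edges S E ty I (Suc(Suc m))"
  by (simp only: igs_edges.simps) (rule UnI1, blast)
lemma e2: "((u,v),t) \<in> igs_edges S E ty I (Suc m) \<Longrightarrow> (x,y) \<in> I t \<Longrightarrow> ((u@[x],v@[y]),t) \<in> igs_edges S E ty I (Suc(Suc m))"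
  by (simp only: igs_edges.simps) (rule UnI2, blast)
lemma eE: "((w,v),t) \<in> igs_edges S E ty I (Suc(Suc m)) \<Longrightarrow>
   (\<exists>u x y. w = u@[x] \<and> v = u@[y] \<and> t = ty(x,y) \<and> length u = Suc m \<and> set u \<subseteq> S \<and> (x,y)\<in>E)
     \<or> (\<exists>u u' x y. w = u@[x] \<and> v = u'@[y] \<and> ((u,u'),t) \<in> igs_edges S E ty I (Suc m) \<and> (x,y) \<in> I t)"
  by (simp only: igs_edges.simps) blast
lemma e0: "((w,v),t) \<in> igs_edges S E ty I (Suc 0) \<Longrightarrow> \<exists>x y. w=[x] \<and> v=[y] \<and> (x,y)\<in>E \<and> t = ty(x,y)"
  by (simp only: igs_edges.simps) blast

lemma edges_prefix:
  assumes "a \<in> S"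
  shows "((w,v),t) \<in> igs_edges S E ty I (Suc n) \<Longrightarrow> ((a#w,a#v),t) \<in> igs_edges S E ty I (Suc (Suc n))"
proof (induction n arbitrary: w v t)
  case 0
  then obtain x y where xy: "w=[x]" "v=[y]" "(x,y)\<in>E" "t = ty(x,y)" using e0[OF 0] by blast
  have "(([a]@[x],[a]@[y]), ty(x,y)) \<in> igs_edges S E ty I (Suc (Suc 0))"
    by (rule e1) (use xy assms in simp_all)
  then show ?case using xy by (simp only: append.simps)
next
  case (Suc n)
  from eE[OF Suc.prems] show ?case
  proof (elim disjE exE conjE)
    fix u x y assume h: "w = u@[x]" "v = u@[y]" "t = ty(x,y)" "length u = Suc n" "set u \<subseteq> S" "(x,y)\<in>E"
    have "(((a#u)@[x],(a#u)@[y]), ty(x,y)) \<in> igs_edges S E ty I (Suc (Suc (Suc n)))"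
      by (rule e1) (use h assms in auto)
    then show ?case using h by (simp del: igs_edges.simps)
  next
    fix u u' x y assume h: "w = u@[x]" "v = u'@[y]" "((u,u'),t) \<in> igs_edges S E ty I (Suc n)" "(x,y) \<in> I t"
    from Suc.IH[OF h(3)] have "((a#u,a#u'),t) \<in> igs_edges S E ty I (Suc (Suc n))" .
    then have "(((a#u)@[x],(a#u')@[y]), t) \<in> igs_edges S E ty I (Suc (Suc (Suc n)))"
      using h(4) by (rule e2)
    then show ?case using h by (simp del: igs_edges.simps)
  qed
qed

lemma adj_prefix:
  assumes "a \<in> S" "(w,v) \<in> igs_adj S E ty I (Suc n)"
  shows "(a#w,a#v) \<in> igs_adj S E ty I (Suc (Suc n))"
proof -
  from assms(2) obtain t where "((w,v),t) \<in> igs_edges S E ty I (Suc n) \<or> ((v,w),t) \<in> igs_edges S E ty I (Suc n)"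
    unfolding igs_adj_def by blast
  then have "((a#w,a#v),t) \<in> igs_edges S E ty I (Suc (Suc n)) \<or> ((a#v,a#w),t) \<in> igs_edges S E ty I (Suc (Suc n))"
    using edges_prefix[OF assms(1), where w=w and v=v and t=t and n=n and E=E and ty=ty and I=I]
      edges_prefix[OF assms(1), where w=v and v=w and t=t and n=n and E=E and ty=ty and I=I] by blast
  then show ?thesis unfolding igs_adj_def by blast
qed

lemma relpow_prefix:
  assumes "a \<in> S"
  shows "(w,v) \<in> (igs_adj S E ty I (Suc n))^^k \<Longrightarrow> (a#w,a#v) \<in> (igs_adj S E ty I (Suc (Suc n)))^^k"
proof (induction k arbitrary: v)
  case 0
  then show ?case by simp
next
  case (Suc k)
  from Suc.prems obtain z where z1: "(w,z) \<in> (igs_adj S E ty I (Suc n))^^k" and z2: "(z,v) \<in> igs_adj S E ty I (Suc n)"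
    by (rule relpow_Suc_E)
  show ?case by (rule relpow_Suc_I[OF Suc.IH[OF z1] adj_prefix[OF assms z2]])
qed

lemma cross_edge:
  assumes "(i,j) \<in> E" "(j,i) \<in> I (ty(i,j))"
  shows "((i # replicate n j, j # replicate n i), ty(i,j)) \<in> igs_edges S E ty I (Suc n)"
proof (induction n)
  case 0
  then show ?case using assms by auto
next
  case (Suc n)
  have "(((i # replicate n j)@[j], (j # replicate n i)@[i]), ty(i,j)) \<in> igs_edges S E ty I (Suc (Suc n))"
    using Suc assms(2) by (rule e2)
  moreover have "replicate (Suc n) j = replicate n j @ [j]" "replicate (Suc n) i = replicate n i @ [i]"
    by (simp_all add: replicate_append_same)
  ultimately show ?case by (simp del: igs_edges.simps)
qed

lemma main_path:
  assumes E: "\<And>i j. (i,j) \<in> E \<Longrightarrow> i \<in> S \<and> j \<in> S \<and> (j,i) \<in> I (ty(i,j))"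
  shows "\<forall>i j. (i,j) \<in> E \<longrightarrow>
     (replicate (Suc n) i, replicate (Suc n) j) \<in> (igs_adj S E ty I (Suc n))^^(2^(Suc n) - 1)
   \<and> (replicate (Suc n) j, replicate (Suc n) i) \<in> (igs_adj S E ty I (Suc n))^^(2^(Suc n) - 1)"
proof (induction n)
  case 0
  show ?case by (auto simp: igs_adj_def)
next
  case (Suc n)
  show ?case
  proof (intro allI impI)
    fix i j assume ij: "(i,j) \<in> E"
    let ?A = "igs_adj S E ty I (Suc (Suc n))"
    let ?K = "2^(Suc n) - 1 :: nat"
    from E[OF ij] have iS: "i \<in> S" and jS: "j \<in> S" and ji: "(j,i) \<in> I (ty(i,j))" by auto
    from Suc.IH ij have p1: "(replicate (Suc n) i, replicate (Suc n) j) \<in> (igs_adj S E ty I (Suc n))^^?K"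
      and p2: "(replicate (Suc n) j, replicate (Suc n) i) \<in> (igs_adj S E ty I (Suc n))^^?K" by auto
    have c1: "(i # replicate (Suc n) j, j # replicate (Suc n) i) \<in> ?A"
      using cross_edge[where E=E and I=I and ty=ty and i=i and j=j and n="Suc n" and S=S, OF ij ji] unfolding igs_adj_def by blast
    have c2: "(j # replicate (Suc n) i, i # replicate (Suc n) j) \<in> ?A"
      using cross_edge[where E=E and I=I and ty=ty and i=i and j=j and n="Suc n" and S=S, OF ij ji] unfolding igs_adj_def by blast
    have q1: "(i # replicate (Suc n) i, i # replicate (Suc n) j) \<in> ?A^^?K"
      using relpow_prefix[OF iS p1] .
    have q2: "(j # replicate (Suc n) i, j # replicate (Suc n) j) \<in> ?A^^?K"
      using relpow_prefix[OF jS p1] .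
    have q3: "(j # replicate (Suc n) j, j # replicate (Suc n) i) \<in> ?A^^?K"
      using relpow_prefix[OF jS p2] .
    have q4: "(i # replicate (Suc n) j, i # replicate (Suc n) i) \<in> ?A^^?K"
      using relpow_prefix[OF iS p2] .
    have eq: "(2::nat)^(Suc (Suc n)) - 1 = ?K + (1 + ?K)"
    proof -
      have "(2::nat)^(Suc n) \<ge> 1" by simp
      then show ?thesis by simp
    qed
    have r1: "(i # replicate (Suc n) i, j # replicate (Suc n) j) \<in> ?A^^(?K + (1 + ?K))"
      unfolding relpow_add using q1 c1 q2 by (intro relcompI[OF q1] relcompI[OF _ q2]) (simp add: c1)
    have r2: "(j # replicate (Suc n) j, i # replicate (Suc n) i) \<in> ?A^^(?K + (1 + ?K))"
      unfolding relpow_add using q3 c2 q4 by (intro relcompI[OF q3] relcompI[OF _ q4]) (simp add: c2)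
    show "(replicate (Suc (Suc n)) i, replicate (Suc (Suc n)) j) \<in> ?A^^(2^(Suc (Suc n)) - 1)
        \<and> (replicate (Suc (Suc n)) j, replicate (Suc (Suc n)) i) \<in> ?A^^(2^(Suc (Suc n)) - 1)"
      using r1 r2 unfolding eq by simp
  qed
qed

lemma dist_le:
  assumes "(w,v) \<in> (igs_adj S E ty I m)^^k" "k \<le> K"
  shows "igs_dist S E ty I m w v \<le> enat K"
proof -
  have "igs_dist S E ty I m w v \<le> enat k"
    unfolding igs_dist_def using assms(1) by (intro INF_lower2[of k]) auto
  also have "\<dots> \<le> enat K" using assms(2) by simp
  finally show ?thesis .
qed

lemma path_sym:
  assumes E: "\<And>i j. (i,j) \<in> E \<Longrightarrow> i \<in> S \<and> j \<in> S \<and> (j,i) \<in> I (ty(i,j))"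
    and ij: "(i,j) \<in> E \<or> (j,i) \<in> E"
  shows "(replicate (Suc n) i, replicate (Suc n) j) \<in> (igs_adj S E ty I (Suc n))^^(2^(Suc n) - 1)"
  using main_path[where S=S and E=E and ty=ty and I=I and n=n, OF E] ij by blast

lemma dist_main:
  assumes E: "\<And>i j. (i,j) \<in> E \<Longrightarrow> i \<in> S \<and> j \<in> S \<and> (j,i) \<in> I (ty(i,j))"
    and ij: "i = j \<or> ((i,j) \<in> E \<or> (j,i) \<in> E) \<or> (\<exists>k. ((i,k) \<in> E \<or> (k,i) \<in> E) \<and> ((k,j) \<in> E \<or> (j,k) \<in> E))"
  shows "igs_dist S E ty I (Suc n) (replicate (Suc n) i) (replicate (Suc n) j) \<le> enat (2^(Suc n + 1) - 1)"
proof -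
  let ?A = "igs_adj S E ty I (Suc n)"
  let ?K = "2^(Suc n) - 1 :: nat"
  have le1: "?K \<le> 2^(Suc n + 1) - 1" by simp
  have le2: "?K + ?K \<le> 2^(Suc n + 1) - 1" by simp
  from ij consider "i = j" | "(i,j) \<in> E \<or> (j,i) \<in> E"
    | k where "(i,k) \<in> E \<or> (k,i) \<in> E" "(k,j) \<in> E \<or> (j,k) \<in> E" by blast
  then show ?thesis
  proof cases
    case 1
    then show ?thesis by (intro dist_le[where k=0]) auto
  next
    case 2
    show ?thesis by (rule dist_le[OF path_sym[where S=S and E=E and ty=ty and I=I and n=n, OF E 2] le1])
  next
    case 3
    have "(replicate (Suc n) i, replicate (Suc n) j) \<in> ?A^^(?K + ?K)"
      unfolding relpow_add by (rule relcompI[OF path_sym[where S=S and E=E and ty=ty and I=I and n=n, OF E 3(1)] path_sym[where S=S and E=E and ty=ty and I=I and n=n, OF E 3(2)]])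
    then show ?thesis by (rule dist_le[OF _ le2])
  qed
qed

lemma dist_main_SG:
  assumes E: "\<And>i j. (i,j) \<in> E \<Longrightarrow> i \<in> S \<and> j \<in> S \<and> (j,i) \<in> I (ty(i,j))"
    and ij: "i = j \<or> ((i,j) \<in> E \<or> (j,i) \<in> E)"
  shows "igs_dist S E ty I (Suc n) (replicate (Suc n) i) (replicate (Suc n) j) \<le> enat (2^(Suc n) - 1)"
proof -
  from ij consider "i = j" | "(i,j) \<in> E \<or> (j,i) \<in> E" by blast
  then show ?thesis
  proof cases
    case 1
    then show ?thesis by (intro dist_le[where k=0]) auto
  next
    case 2
    show ?thesis by (rule dist_le[OF path_sym[where S=S and E=E and ty=ty and I=I and n=n, OF E 2] order_refl])
  qed
qed

lemma SG_E_ok: "(i,j) \<in> SG_E \<Longrightarrow> i \<in> SG_S \<and> j \<in> SG_S \<and> (j,i) \<in> SG_I (SG_ty(i,j))"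
  by (auto simp: SG_E_def SG_S_def SG_I_def SG_ty_def)

lemma PC_E_ok: "(i,j) \<in> PC_E \<Longrightarrow> i \<in> PC_S \<and> j \<in> PC_S \<and> (j,i) \<in> PC_I (PC_ty(i,j))"
  by (auto simp: PC_E_def PC_S_def PC_I_def PC_ty_def)

lemma SG_pairs: "i \<in> SG_S \<Longrightarrow> j \<in> SG_S \<Longrightarrow> i = j \<or> ((i,j) \<in> SG_E \<or> (j,i) \<in> SG_E)"
  by (auto simp: SG_E_def SG_S_def)

lemma PC_pairs0: "i \<in> PC_S \<Longrightarrow> j \<in> PC_S \<Longrightarrow>
   i = j \<or> ((i,j) \<in> PC_E \<or> (j,i) \<in> PC_E) \<or> (\<exists>k\<in>{0,1,2,3,4::nat}. ((i,k) \<in> PC_E \<or> (k,i) \<in> PC_E) \<and> ((k,j) \<in> PC_E \<or> (j,k) \<in> PC_E))"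
  unfolding PC_S_def by (elim insertE emptyE) (simp_all add: PC_E_def)
lemma PC_pairs: "i \<in> PC_S \<Longrightarrow> j \<in> PC_S \<Longrightarrow>
   i = j \<or> ((i,j) \<in> PC_E \<or> (j,i) \<in> PC_E) \<or> (\<exists>k. ((i,k) \<in> PC_E \<or> (k,i) \<in> PC_E) \<and> ((k,j) \<in> PC_E \<or> (j,k) \<in> PC_E))"
  using PC_pairs0 by blast

theorem lemma5p18:
  shows "(\<forall>m \<ge> 1. \<forall>i \<in> SG_S. \<forall>j \<in> SG_S.
            igs_dist SG_S SG_E SG_ty SG_I m (replicate m i) (replicate m j)
              \<le> enat (2 ^ m - 1))
       \<and> (\<forall>m \<ge> 1. \<forall>i \<in> PC_S. \<forall>j \<in> PC_S.
            igs_dist PC_S PC_E PC_ty PC_I m (replicate m i) (replicate m j)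
              \<le> enat (2 ^ (m + 1) - 1))"
proof (intro conjI allI impI ballI)
  fix m i j :: nat assume m: "m \<ge> 1" and i: "i \<in> SG_S" and j: "j \<in> SG_S"
  from m obtain n where mn: "m = Suc n" by (cases m) auto
  show "igs_dist SG_S SG_E SG_ty SG_I m (replicate m i) (replicate m j) \<le> enat (2 ^ m - 1)"
    unfolding mn by (rule dist_main_SG[where S=SG_S and E=SG_E and ty=SG_ty and I=SG_I and n=n, OF SG_E_ok SG_pairs[OF i j]])
next
  fix m i j :: nat assume m: "m \<ge> 1" and i: "i \<in> PC_S" and j: "j \<in> PC_S"
  from m obtain n where mn: "m = Suc n" by (cases m) auto
  show "igs_dist PC_S PC_E PC_ty PC_I m (replicate m i) (replicate m j) \<le> enat (2 ^ (m + 1) - 1)"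
    unfolding mn by (rule dist_main[where S=PC_S and E=PC_E and ty=PC_ty and I=PC_I and n=n, OF PC_E_ok PC_pairs[OF i j]])
qed

end
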